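(* Let $A$ be a ring and $|\cdot|:A\to R$ a generalized seminorm that has tiny balls. Then the ball neighborhood topology for $|\cdot|$ exists (there is a unique topology on $A$ compatible with addition in which, for every $x\in A$, the non-empty open balls $B(x,|a|)$, $a\in A$, $|a|>0$, form a fundamental system of neighborhoods of $x$), and it makes $A$ a topological ring.
   Context: A halo is a commutative unital semiring with a partial order compatible with $+$ and $\cdot$; an aura is a halo whose semiring is a semifield; positive means $0<1$. A generalized seminorm is a map $|\cdot|:A\to R$ into a positive totally ordered aura with $|0|=0,|1|=1$, $|a+b|\le|a|+|b|$, $|ab|\le|a||b|$. For $x,a\in A$ with $|a|>0$, the open ball is $B(x,|a|)=\{z\in A:|z-x|<|a|\}$. $|\cdot|$ has tiny balls if: (1) for all $a$ with $|a|>0$ there is $a'$ with $|a'|>0$ and $B(0,|a'|)+B(0,|a'|)\subset B(0,|a|)$; (2) for all $a$ with $|a|>0$ and all $x\in A$ there is $c$ with $|c|>0$ and $x\cdot B(0,|c|)\subset B(0,|a|)$; (3) for all $a$ with $|a|>0$ there is $a'$ with $|a'|>0$ and $B(0,|a'|)\cdot B(0,|a'|)\subset B(0,|a|)$; (4) for all $a$ with $|a|>0$ there is $a'$ with $|a'|>0$ and $-B(0,|a'|)\subset B(0,|a|)$. *)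

theory Defs
  imports "HOL-Analysis.Analysis"
begin

text \<open>The target R of a generalized seminorm is modelled as a type 'r carrying a
commutative unital semiring structure (comm_semiring_1, which includes 0 \<noteq> 1) and a
total order.\<close>

definition halo_compatible :: "'r::{comm_semiring_1,order} itself \<Rightarrow> bool" where
  "halo_compatible _ \<longleftrightarrow>
     (\<forall>x y z :: 'r. x \<le> y \<longrightarrow> x + z \<le> y + z) \<and>
     (\<forall>x y z :: 'r. x \<le> y \<longrightarrow> x * z \<le> y * z)"

definition semifield_axiom :: "'r::comm_semiring_1 itself \<Rightarrow> bool" where
  "semifield_axiom _ \<longleftrightarrow> (\<forall>x :: 'r. x \<noteq> 0 \<longrightarrow> (\<exists>y. x * y = 1))"

definition positive_totally_ordered_aura :: "'r::{comm_semiring_1,linorder} itself \<Rightarrow> bool" where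
  "positive_totally_ordered_aura T \<longleftrightarrow>
     halo_compatible T \<and> semifield_axiom T \<and> (0::'r) < 1"

definition gen_seminorm :: "('a::comm_ring_1 \<Rightarrow> 'r::{comm_semiring_1,linorder}) \<Rightarrow> bool" where
  "gen_seminorm nrm \<longleftrightarrow>
     positive_totally_ordered_aura TYPE('r) \<and>
     nrm 0 = 0 \<and> nrm 1 = 1 \<and>
     (\<forall>a b. nrm (a + b) \<le> nrm a + nrm b) \<and>
     (\<forall>a b. nrm (a * b) \<le> nrm a * nrm b)"

definition nball :: "('a::comm_ring_1 \<Rightarrow> 'r::{comm_semiring_1,linorder}) \<Rightarrow> 'a \<Rightarrow> 'a \<Rightarrow> 'a set" where
  "nball nrm x a = {z. nrm (z - x) < nrm a}"

definition has_tiny_balls :: "('a::comm_ring_1 \<Rightarrow> 'r::{comm_semiring_1,linorder}) \<Rightarrow> bool" where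
  "has_tiny_balls nrm \<longleftrightarrow>
     (\<forall>a. 0 < nrm a \<longrightarrow> (\<exists>a'. 0 < nrm a' \<and>
         {u + v | u v. u \<in> nball nrm 0 a' \<and> v \<in> nball nrm 0 a'} \<subseteq> nball nrm 0 a)) \<and>
     (\<forall>a x. 0 < nrm a \<longrightarrow> (\<exists>c. 0 < nrm c \<and>
         (\<lambda>z. x * z) ` nball nrm 0 c \<subseteq> nball nrm 0 a)) \<and>
     (\<forall>a. 0 < nrm a \<longrightarrow> (\<exists>a'. 0 < nrm a' \<and>
         {u * v | u v. u \<in> nball nrm 0 a' \<and> v \<in> nball nrm 0 a'} \<subseteq> nball nrm 0 a)) \<and>
     (\<forall>a. 0 < nrm a \<longrightarrow> (\<exists>a'. 0 < nrm a' \<and>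
         uminus ` nball nrm 0 a' \<subseteq> nball nrm 0 a))"

definition nbhd_in :: "'a topology \<Rightarrow> 'a \<Rightarrow> 'a set \<Rightarrow> bool" where
  "nbhd_in T x N \<longleftrightarrow> (\<exists>U. openin T U \<and> x \<in> U \<and> U \<subseteq> N)"

definition is_ball_nbhd_topology ::
  "('a::comm_ring_1 \<Rightarrow> 'r::{comm_semiring_1,linorder}) \<Rightarrow> 'a topology \<Rightarrow> bool" where
  "is_ball_nbhd_topology nrm T \<longleftrightarrow>
     topspace T = UNIV \<and>
     continuous_map (prod_topology T T) T (\<lambda>(x, y). x + y) \<and>
     (\<forall>x. (\<forall>a. 0 < nrm a \<longrightarrow> nbhd_in T x (nball nrm x a)) \<and>
          (\<forall>N. nbhd_in T x N \<longrightarrow> (\<exists>a. 0 < nrm a \<and> nball nrm x a \<subseteq> N)))"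

definition topological_ring_top :: "'a::comm_ring_1 topology \<Rightarrow> bool" where
  "topological_ring_top T \<longleftrightarrow>
     topspace T = UNIV \<and>
     continuous_map (prod_topology T T) T (\<lambda>(x, y). x + y) \<and>
     continuous_map T T uminus \<and>
     continuous_map (prod_topology T T) T (\<lambda>(x, y). x * y)"

end

theory Submission
  imports Defs
begin

definition opn :: "('a::comm_ring_1 \<Rightarrow> 'r::{comm_semiring_1,linorder}) \<Rightarrow> 'a set \<Rightarrow> bool" where
  "opn nrm U \<longleftrightarrow> (\<forall>x\<in>U. \<exists>a. 0 < nrm a \<and> nball nrm x a \<subseteq> U)"

lemma nball_shift: "z \<in> nball nrm x a \<longleftrightarrow> z - x \<in> nball nrm 0 a"
  by (simp add: nball_def)

lemma nball_mono: "nrm a \<le> nrm b \<Longrightarrow> nball nrm x a \<subseteq> nball nrm x b"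
  by (auto simp: nball_def)

lemma nball_min:
  fixes nrm :: "'a::comm_ring_1 \<Rightarrow> 'r::{comm_semiring_1,linorder}"
  assumes "0 < nrm a" "0 < nrm b"
  shows "\<exists>c. 0 < nrm c \<and> (\<forall>x. nball nrm x c \<subseteq> nball nrm x a \<and> nball nrm x c \<subseteq> nball nrm x b)"
proof (cases "nrm a \<le> nrm b")
  case True then show ?thesis using assms(1) nball_mono[of nrm a b] by auto
next
  case False then have "nrm b \<le> nrm a" by simp
  then show ?thesis using assms(2) nball_mono[of nrm b a] by auto
qed

lemma center_in: "nrm (0::'a::comm_ring_1) = 0 \<Longrightarrow> 0 < nrm a \<Longrightarrow> x \<in> nball nrm x a"
  by (simp add: nball_def)

lemma tiny1:
  assumes "has_tiny_balls nrm" "0 < nrm a"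
  shows "\<exists>a'. 0 < nrm a' \<and> (\<forall>u v. u \<in> nball nrm 0 a' \<longrightarrow> v \<in> nball nrm 0 a' \<longrightarrow> u + v \<in> nball nrm 0 a)"
proof -
  obtain a' where "0 < nrm a'" "{u + v | u v. u \<in> nball nrm 0 a' \<and> v \<in> nball nrm 0 a'} \<subseteq> nball nrm 0 a"
    using assms(1)[unfolded has_tiny_balls_def, THEN conjunct1] assms(2) by blast
  then show ?thesis by blast
qed

lemma tiny2:
  assumes "has_tiny_balls nrm" "0 < nrm a"
  shows "\<exists>c. 0 < nrm c \<and> (\<forall>u. u \<in> nball nrm 0 c \<longrightarrow> x * u \<in> nball nrm 0 a)"
proof -
  obtain c where "0 < nrm c" "(\<lambda>z. x * z) ` nball nrm 0 c \<subseteq> nball nrm 0 a"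
    using assms(1)[unfolded has_tiny_balls_def, THEN conjunct2, THEN conjunct1] assms(2) by blast
  then show ?thesis by blast
qed

lemma tiny3:
  assumes "has_tiny_balls nrm" "0 < nrm a"
  shows "\<exists>a'. 0 < nrm a' \<and> (\<forall>u v. u \<in> nball nrm 0 a' \<longrightarrow> v \<in> nball nrm 0 a' \<longrightarrow> u * v \<in> nball nrm 0 a)"
proof -
  obtain a' where "0 < nrm a'" "{u * v | u v. u \<in> nball nrm 0 a' \<and> v \<in> nball nrm 0 a'} \<subseteq> nball nrm 0 a"
    using assms(1)[unfolded has_tiny_balls_def, THEN conjunct2, THEN conjunct2, THEN conjunct1] assms(2) by blast
  then show ?thesis by blast
qed

lemma tiny4:
  assumes "has_tiny_balls nrm" "0 < nrm a"
  shows "\<exists>a'. 0 < nrm a' \<and> (\<forall>u. u \<in> nball nrm 0 a' \<longrightarrow> - u \<in> nball nrm 0 a)"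
proof -
  obtain a' where "0 < nrm a'" "uminus ` nball nrm 0 a' \<subseteq> nball nrm 0 a"
    using assms(1)[unfolded has_tiny_balls_def, THEN conjunct2, THEN conjunct2, THEN conjunct2] assms(2) by blast
  then show ?thesis by blast
qed

lemma opn_topology:
  fixes nrm :: "'a::comm_ring_1 \<Rightarrow> 'r::{comm_semiring_1,linorder}"
  shows "istopology (opn nrm)"
  unfolding istopology_def
proof (intro conjI allI impI)
  fix S T assume "opn nrm S" "opn nrm T"
  then show "opn nrm (S \<inter> T)"
    unfolding opn_def
  proof (intro ballI)
    fix x assume x: "x \<in> S \<inter> T"
    obtain a where a: "0 < nrm a" "nball nrm x a \<subseteq> S" using \<open>opn nrm S\<close> x unfolding opn_def by blast
    obtain b where b: "0 < nrm b" "nball nrm x b \<subseteq> T" using \<open>opn nrm T\<close> x unfolding opn_def by blast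
    obtain c where "0 < nrm c" "nball nrm x c \<subseteq> nball nrm x a" "nball nrm x c \<subseteq> nball nrm x b"
      using nball_min[OF a(1) b(1)] by blast
    then show "\<exists>c. 0 < nrm c \<and> nball nrm x c \<subseteq> S \<inter> T" using a b by blast
  qed
next
  fix K assume "\<forall>S\<in>K. opn nrm S"
  then show "opn nrm (\<Union>K)" unfolding opn_def by (meson Union_iff Union_upper subset_trans)
qed

lemma interior_ball:
  fixes nrm :: "'a::comm_ring_1 \<Rightarrow> 'r::{comm_semiring_1,linorder}"
  assumes tb: "has_tiny_balls nrm" and n0: "nrm 0 = 0" and a: "0 < nrm a"
  shows "\<exists>V. opn nrm V \<and> x \<in> V \<and> V \<subseteq> nball nrm x a"
proof -
  let ?V = "{y. \<exists>b. 0 < nrm b \<and> nball nrm y b \<subseteq> nball nrm x a}"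
  have "opn nrm ?V"
    unfolding opn_def
  proof
    fix y assume "y \<in> ?V"
    then obtain b where b: "0 < nrm b" "nball nrm y b \<subseteq> nball nrm x a" by blast
    obtain b' where b': "0 < nrm b'" "\<forall>u v. u \<in> nball nrm 0 b' \<longrightarrow> v \<in> nball nrm 0 b' \<longrightarrow> u + v \<in> nball nrm 0 b"
      using tiny1[OF tb b(1)] by blast
    have "nball nrm y b' \<subseteq> ?V"
    proof
      fix z assume z: "z \<in> nball nrm y b'"
      have "nball nrm z b' \<subseteq> nball nrm x a"
      proof
        fix w assume w: "w \<in> nball nrm z b'"
        have "(w - z) + (z - y) \<in> nball nrm 0 b"
          using b' w z nball_shift by metis
        then have "w \<in> nball nrm y b" using nball_shift[of w nrm y b] by simp
        then show "w \<in> nball nrm x a" using b by blast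
      qed
      then show "z \<in> ?V" using b' by blast
    qed
    then show "\<exists>a. 0 < nrm a \<and> nball nrm y a \<subseteq> ?V" using b' by blast
  qed
  moreover have "x \<in> ?V" using a by blast
  moreover have "?V \<subseteq> nball nrm x a" using center_in[of nrm, OF n0] by blast
  ultimately show ?thesis by blast
qed

lemma openin_char:
  fixes nrm :: "'a::comm_ring_1 \<Rightarrow> 'r::{comm_semiring_1,linorder}"
  assumes T: "is_ball_nbhd_topology nrm T"
  shows "openin T U \<longleftrightarrow> opn nrm U"
proof -
  have ts: "topspace T = UNIV" and
    B1: "\<And>x a. 0 < nrm a \<Longrightarrow> nbhd_in T x (nball nrm x a)" and
    B2: "\<And>x N. nbhd_in T x N \<Longrightarrow> \<exists>a. 0 < nrm a \<and> nball nrm x a \<subseteq> N"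
    using T unfolding is_ball_nbhd_topology_def by blast+
  show ?thesis
  proof
    assume U: "openin T U"
    show "opn nrm U" unfolding opn_def
    proof
      fix x assume "x \<in> U"
      then have "nbhd_in T x U" using U unfolding nbhd_in_def by blast
      then show "\<exists>a. 0 < nrm a \<and> nball nrm x a \<subseteq> U" by (rule B2)
    qed
  next
    assume o: "opn nrm U"
    have "\<forall>x\<in>U. \<exists>V. openin T V \<and> x \<in> V \<and> V \<subseteq> U"
    proof
      fix x assume "x \<in> U"
      then obtain a where a: "0 < nrm a" "nball nrm x a \<subseteq> U" using o unfolding opn_def by blast
      obtain V where "openin T V" "x \<in> V" "V \<subseteq> nball nrm x a"
        using B1[OF a(1), of x] unfolding nbhd_in_def by blast
      then show "\<exists>V. openin T V \<and> x \<in> V \<and> V \<subseteq> U" using a(2) by blast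
    qed
    then show "openin T U" using openin_subopen by blast
  qed
qed

lemma cont1:
  fixes nrm :: "'a::comm_ring_1 \<Rightarrow> 'r::{comm_semiring_1,linorder}"
  assumes OC: "\<And>U. openin T U \<longleftrightarrow> opn nrm U" and ts: "topspace T = UNIV" and tb: "has_tiny_balls nrm" and n0: "nrm 0 = 0"
    and H: "\<And>x a. 0 < nrm a \<Longrightarrow> \<exists>b. 0 < nrm b \<and> (\<forall>v\<in>nball nrm x b. f v \<in> nball nrm (f x) a)"
  shows "continuous_map T T f"
proof -
  have "openin T {x \<in> topspace T. f x \<in> U}" if U: "openin T U" for U
  proof -
    have "opn nrm {x. f x \<in> U}" unfolding opn_def
    proof
      fix x assume "x \<in> {x. f x \<in> U}"
      then obtain a where a: "0 < nrm a" "nball nrm (f x) a \<subseteq> U"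
        using U OC unfolding opn_def by blast
      then obtain b where "0 < nrm b" "\<forall>v\<in>nball nrm x b. f v \<in> nball nrm (f x) a" using H by blast
      then show "\<exists>b. 0 < nrm b \<and> nball nrm x b \<subseteq> {x. f x \<in> U}" using a by blast
    qed
    then show ?thesis using OC ts by simp
  qed
  then show ?thesis unfolding continuous_map_def ts by simp
qed

lemma cont2:
  fixes nrm :: "'a::comm_ring_1 \<Rightarrow> 'r::{comm_semiring_1,linorder}"
  assumes OC: "\<And>U. openin T U \<longleftrightarrow> opn nrm U" and ts: "topspace T = UNIV" and tb: "has_tiny_balls nrm" and n0: "nrm 0 = 0"
    and H: "\<And>x y a. 0 < nrm a \<Longrightarrow> \<exists>b. 0 < nrm b \<and>
         (\<forall>v\<in>nball nrm x b. \<forall>w\<in>nball nrm y b. f v w \<in> nball nrm (f x y) a)"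
  shows "continuous_map (prod_topology T T) T (\<lambda>(x, y). f x y)"
proof -
  have "openin (prod_topology T T) {z \<in> topspace (prod_topology T T). (\<lambda>(x, y). f x y) z \<in> U}"
    if U: "openin T U" for U
    unfolding openin_prod_topology_alt
  proof (intro allI impI)
    fix x y assume "(x, y) \<in> {z \<in> topspace (prod_topology T T). (\<lambda>(x, y). f x y) z \<in> U}"
    then have "f x y \<in> U" by simp
    moreover have "opn nrm U" using U OC by simp
    ultimately obtain a where a: "0 < nrm a" "nball nrm (f x y) a \<subseteq> U"
      unfolding opn_def by blast
    then obtain b where b: "0 < nrm b" "\<forall>v\<in>nball nrm x b. \<forall>w\<in>nball nrm y b. f v w \<in> nball nrm (f x y) a"
      using H[of a x y] by blast
    obtain V where V: "opn nrm V" "x \<in> V" "V \<subseteq> nball nrm x b" using interior_ball[OF tb n0 b(1)] by blast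
    obtain W where W: "opn nrm W" "y \<in> W" "W \<subseteq> nball nrm y b" using interior_ball[OF tb n0 b(1)] by blast
    have "V \<times> W \<subseteq> {z \<in> topspace (prod_topology T T). (\<lambda>(x, y). f x y) z \<in> U}"
    proof
      fix z assume "z \<in> V \<times> W"
      then obtain v w where z: "z = (v, w)" "v \<in> V" "w \<in> W" by blast
      then have "f v w \<in> nball nrm (f x y) a" using V(3) W(3) b(2) by blast
      then have "f v w \<in> U" using a(2) by blast
      then show "z \<in> {z \<in> topspace (prod_topology T T). (\<lambda>(x, y). f x y) z \<in> U}"
        using z ts by (simp add: topspace_prod_topology)
    qed
    then show "\<exists>U' V'. openin T U' \<and> openin T V' \<and> x \<in> U' \<and> y \<in> V' \<and>
         U' \<times> V' \<subseteq> {z \<in> topspace (prod_topology T T). (\<lambda>(x, y). f x y) z \<in> U}"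
      using V W OC[of V] OC[of W] by blast
  qed
  then show ?thesis unfolding continuous_map_def by (simp add: ts topspace_prod_topology)
qed

lemma add_cond:
  fixes nrm :: "'a::comm_ring_1 \<Rightarrow> 'r::{comm_semiring_1,linorder}"
  assumes tb: "has_tiny_balls nrm" and a: "0 < nrm a"
  shows "\<exists>b. 0 < nrm b \<and> (\<forall>v\<in>nball nrm x b. \<forall>w\<in>nball nrm y b. v + w \<in> nball nrm (x + y) a)"
proof -
  obtain b where b: "0 < nrm b" "\<forall>u v. u \<in> nball nrm 0 b \<longrightarrow> v \<in> nball nrm 0 b \<longrightarrow> u + v \<in> nball nrm 0 a"
    using tiny1[OF tb a] by blast
  have "v + w \<in> nball nrm (x + y) a" if "v\<in>nball nrm x b" "w\<in>nball nrm y b" for v w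
  proof -
    have "(v - x) + (w - y) \<in> nball nrm 0 a" using b that nball_shift by metis
    moreover have "(v - x) + (w - y) = (v + w) - (x + y)" by (simp add: algebra_simps)
    ultimately show ?thesis using nball_shift by metis
  qed
  then show ?thesis using b by blast
qed

lemma neg_cond:
  fixes nrm :: "'a::comm_ring_1 \<Rightarrow> 'r::{comm_semiring_1,linorder}"
  assumes tb: "has_tiny_balls nrm" and a: "0 < nrm a"
  shows "\<exists>b. 0 < nrm b \<and> (\<forall>v\<in>nball nrm x b. - v \<in> nball nrm (- x) a)"
proof -
  obtain b where b: "0 < nrm b" "\<forall>u. u \<in> nball nrm 0 b \<longrightarrow> - u \<in> nball nrm 0 a"
    using tiny4[OF tb a] by blast
  have "- v \<in> nball nrm (- x) a" if "v\<in>nball nrm x b" for v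
  proof -
    have "- (v - x) \<in> nball nrm 0 a" using b that nball_shift by metis
    moreover have "- (v - x) = (- v) - (- x)" by (simp add: algebra_simps)
    ultimately show ?thesis using nball_shift by metis
  qed
  then show ?thesis using b by blast
qed

lemma mult_cond:
  fixes nrm :: "'a::comm_ring_1 \<Rightarrow> 'r::{comm_semiring_1,linorder}"
  assumes tb: "has_tiny_balls nrm" and n0: "nrm 0 = 0" and a: "0 < nrm a"
  shows "\<exists>b. 0 < nrm b \<and> (\<forall>v\<in>nball nrm x b. \<forall>w\<in>nball nrm y b. v * w \<in> nball nrm (x * y) a)"
proof -
  obtain a1 where a1: "0 < nrm a1" "\<forall>u v. u \<in> nball nrm 0 a1 \<longrightarrow> v \<in> nball nrm 0 a1 \<longrightarrow> u + v \<in> nball nrm 0 a"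
    using tiny1[OF tb a] by blast
  obtain a2 where a2: "0 < nrm a2" "\<forall>u v. u \<in> nball nrm 0 a2 \<longrightarrow> v \<in> nball nrm 0 a2 \<longrightarrow> u + v \<in> nball nrm 0 a1"
    using tiny1[OF tb a1(1)] by blast
  have a21: "u \<in> nball nrm 0 a2 \<Longrightarrow> u \<in> nball nrm 0 a1" for u
    using a2 center_in[OF n0 a2(1), of 0] by (metis add.right_neutral)
  obtain c1 where c1: "0 < nrm c1" "\<forall>u. u \<in> nball nrm 0 c1 \<longrightarrow> x * u \<in> nball nrm 0 a2"
    using tiny2[OF tb a2(1)] by blast
  obtain c2 where c2: "0 < nrm c2" "\<forall>u. u \<in> nball nrm 0 c2 \<longrightarrow> y * u \<in> nball nrm 0 a2"
    using tiny2[OF tb a2(1)] by blast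
  obtain d where d: "0 < nrm d" "\<forall>u v. u \<in> nball nrm 0 d \<longrightarrow> v \<in> nball nrm 0 d \<longrightarrow> u * v \<in> nball nrm 0 a2"
    using tiny3[OF tb a2(1)] by blast
  obtain e1 where e1: "0 < nrm e1" "nball nrm 0 e1 \<subseteq> nball nrm 0 c1" "nball nrm 0 e1 \<subseteq> nball nrm 0 d"
    using nball_min[OF c1(1) d(1)] by blast
  obtain e2 where e2: "0 < nrm e2" "nball nrm 0 e2 \<subseteq> nball nrm 0 c2" "nball nrm 0 e2 \<subseteq> nball nrm 0 d"
    using nball_min[OF c2(1) d(1)] by blast
  obtain b where b: "0 < nrm b" "nball nrm 0 b \<subseteq> nball nrm 0 e1" "nball nrm 0 b \<subseteq> nball nrm 0 e2"
    using nball_min[OF e1(1) e2(1)] by blast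
  have "v * w \<in> nball nrm (x * y) a" if v: "v\<in>nball nrm x b" and w: "w\<in>nball nrm y b" for v w
  proof -
    define p where "p = v - x"
    define q where "q = w - y"
    have p: "p \<in> nball nrm 0 b" using v nball_shift p_def by metis
    have q: "q \<in> nball nrm 0 b" using w nball_shift q_def by metis
    have "x * q \<in> nball nrm 0 a2" using c1 q b e2 e1 by blast
    moreover have "y * p \<in> nball nrm 0 a2" using c2 p b e2 by blast
    ultimately have s1: "x * q + y * p \<in> nball nrm 0 a1" using a2 by blast
    have "p * q \<in> nball nrm 0 a2" using d p q b e1 by blast
    then have "(x * q + y * p) + p * q \<in> nball nrm 0 a" using s1 a1 a21 by blast
    moreover have "(x * q + y * p) + p * q = v * w - x * y"
      unfolding p_def q_def by (simp add: algebra_simps)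
    ultimately show ?thesis using nball_shift by metis
  qed
  then show ?thesis using b by blast
qed

theorem proposition4p5:
  fixes nrm :: "'a::comm_ring_1 \<Rightarrow> 'r::{comm_semiring_1,linorder}"
  assumes "gen_seminorm nrm"
    and "has_tiny_balls nrm"
  shows "(\<exists>!T. is_ball_nbhd_topology nrm T) \<and>
         (\<forall>T. is_ball_nbhd_topology nrm T \<longrightarrow> topological_ring_top T)"
proof -
  have n0: "nrm 0 = 0" and n1: "nrm 1 = 1" and pos: "(0::'r) < 1"
    using assms(1) unfolding gen_seminorm_def positive_totally_ordered_aura_def by auto
  note tb = assms(2)
  define T0 where "T0 = topology (opn nrm)"
  have oT0: "openin T0 = opn nrm" unfolding T0_def using opn_topology[of nrm] by (simp add: topology_inverse')
  have ts0: "topspace T0 = UNIV"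
  proof -
    have "opn nrm UNIV" unfolding opn_def using n1 pos by (metis subset_UNIV)
    then show ?thesis unfolding topspace_def oT0 by auto
  qed
  have nb: "\<forall>x. (\<forall>a. 0 < nrm a \<longrightarrow> nbhd_in T0 x (nball nrm x a)) \<and>
          (\<forall>N. nbhd_in T0 x N \<longrightarrow> (\<exists>a. 0 < nrm a \<and> nball nrm x a \<subseteq> N))"
  proof (intro allI conjI impI)
    fix x a assume "0 < nrm (a::'a)"
    then show "nbhd_in T0 x (nball nrm x a)"
      unfolding nbhd_in_def oT0 using interior_ball[OF tb n0] by blast
  next
    fix x N assume "nbhd_in T0 x N"
    then obtain U where "opn nrm U" "x \<in> U" "U \<subseteq> N" unfolding nbhd_in_def oT0 by blast
    then show "\<exists>a. 0 < nrm a \<and> nball nrm x a \<subseteq> N" unfolding opn_def by blast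
  qed
  have pre: "topspace T0 = UNIV \<and> (\<forall>x. (\<forall>a. 0 < nrm a \<longrightarrow> nbhd_in T0 x (nball nrm x a)) \<and>
          (\<forall>N. nbhd_in T0 x N \<longrightarrow> (\<exists>a. 0 < nrm a \<and> nball nrm x a \<subseteq> N)))"
    using ts0 nb by blast
  have T0: "is_ball_nbhd_topology nrm T0"
  proof -
    have T0': "is_ball_nbhd_topology nrm T0"
      if "continuous_map (prod_topology T0 T0) T0 (\<lambda>(x, y). x + y)"
      using that pre unfolding is_ball_nbhd_topology_def by blast
    have ts: "topspace T0 = UNIV" by (rule ts0)
    have "continuous_map (prod_topology T0 T0) T0 (\<lambda>(x, y). x + y)"
      apply (rule cont2[of T0 nrm, OF _ ts tb n0])
       apply (simp add: oT0)
      by (rule add_cond[OF tb])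
    then show ?thesis by (rule T0')
  qed
  have uniq: "T = T0" if "is_ball_nbhd_topology nrm T" for T
  proof -
    have "\<And>U. openin T U = openin T0 U" using openin_char[OF that] oT0 by simp
    then show ?thesis by (simp add: topology_eq)
  qed
  have ring: "topological_ring_top T" if T: "is_ball_nbhd_topology nrm T" for T
  proof -
    have ts: "topspace T = UNIV" using T unfolding is_ball_nbhd_topology_def by blast
    have "continuous_map (prod_topology T T) T (\<lambda>(x, y). x + y)"
      by (rule cont2[of T nrm, OF openin_char[OF T] ts tb n0]) (rule add_cond[OF tb])
    moreover have "continuous_map T T uminus"
      by (rule cont1[of T nrm, OF openin_char[OF T] ts tb n0]) (rule neg_cond[OF tb])
    moreover have "continuous_map (prod_topology T T) T (\<lambda>(x, y). x * y)"
      by (rule cont2[of T nrm, OF openin_char[OF T] ts tb n0]) (rule mult_cond[OF tb n0])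
    ultimately show ?thesis unfolding topological_ring_top_def using ts by blast
  qed
  show ?thesis using T0 uniq ring by blast
qed

end
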